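(* There is an absolute constant $C$ such that the following holds. Let $A\neq 1$ be a finite group, set $k=k(A)$, let $P\leq S_r$ be a regular permutation group of degree $r$, and let $G=A\wr P$. Then \[ \left|k(G)-\frac{k^r}{r}\right|\leq C\, r\, k^{r/2}. \]
   Context: $k(X)$ denotes the number of conjugacy classes of a finite group $X$. $A\wr P=A^r\rtimes P$ with $P$ permuting the $r$ factors. *)

theory Defs
  imports Complex_Main "HOL-Algebra.Sym_Groups" "HOL-Algebra.Coset"
begin

definition num_conj_classes :: "('a, 'b) monoid_scheme \<Rightarrow> nat" where
  "num_conj_classes X =
     card ((\<lambda>x. {g \<otimes>\<^bsub>X\<^esub> x \<otimes>\<^bsub>X\<^esub> inv\<^bsub>X\<^esub> g | g. g \<in> carrier X}) ` carrier X)"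

definition regular_perm_group :: "nat \<Rightarrow> (nat \<Rightarrow> nat) set \<Rightarrow> bool" where
  "regular_perm_group r P \<longleftrightarrow> subgroup P (sym_group r) \<and>
     (\<forall>i\<in>{1..r}. \<forall>j\<in>{1..r}. \<exists>!\<sigma>. \<sigma> \<in> P \<and> \<sigma> i = j)"

text \<open>Wreath product A wr P = A^r \<rtimes> P, P permuting the r coordinates:
  (f,s)(g,t) = (f \<cdot> (g \<circ> s^-1), s \<circ> t).\<close>
definition wreath :: "('a, 'b) monoid_scheme \<Rightarrow> nat \<Rightarrow> (nat \<Rightarrow> nat) set
                      \<Rightarrow> ((nat \<Rightarrow> 'a) \<times> (nat \<Rightarrow> nat)) monoid" where
  "wreath A r P = \<lparr>
     carrier = {(f, \<sigma>). f \<in> {1..r} \<rightarrow>\<^sub>E carrier A \<and> \<sigma> \<in> P},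
     mult = (\<lambda>(f, \<sigma>) (g, \<tau>). (\<lambda>i\<in>{1..r}. f i \<otimes>\<^bsub>A\<^esub> g (inv' \<sigma> i), \<sigma> \<circ> \<tau>)),
     one = (\<lambda>i\<in>{1..r}. \<one>\<^bsub>A\<^esub>, id) \<rparr>"

end

theory Submission
  imports Defs
begin


locale fpf =
  fixes \<sigma> :: "nat \<Rightarrow> nat" and I :: "nat set"
  assumes perm: "\<sigma> permutes I" and fin: "finite I" and fp: "\<And>i. i \<in> I \<Longrightarrow> \<sigma> i \<noteq> i"
begin

definition orb where "orb i = range (\<lambda>n. (\<sigma> ^^ n) i)"
definition rep where "rep i = Min (orb i)"
definition S where "S = {i\<in>I. rep i = i}"

lemma nil: obtains m where "\<sigma> ^^ m = id" "m > 0"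
  using permutation_is_nilpotent[of \<sigma>] perm fin permutation_permutes by blast

lemma iter_in: "i \<in> I \<Longrightarrow> (\<sigma> ^^ n) i \<in> I"
  by (simp add: perm permutes_funpow permutes_in_image)

lemma orb_sub: "i \<in> I \<Longrightarrow> orb i \<subseteq> I"
  unfolding orb_def using iter_in by auto

lemma orb_fin: "i \<in> I \<Longrightarrow> finite (orb i)"
  using orb_sub fin finite_subset by blast

lemma orb_step: "orb (\<sigma> i) = orb i"
proof
  show "orb (\<sigma> i) \<subseteq> orb i"
  proof
    fix x assume "x \<in> orb (\<sigma> i)"
    then obtain n where "x = (\<sigma> ^^ n) (\<sigma> i)" unfolding orb_def by auto
    hence "x = (\<sigma> ^^ Suc n) i" by (metis comp_apply funpow_Suc_right)
    thus "x \<in> orb i" unfolding orb_def by blast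
  qed
next
  obtain m where m: "\<sigma> ^^ m = id" "m > 0" using nil by blast
  show "orb i \<subseteq> orb (\<sigma> i)"
  proof
    fix x assume "x \<in> orb i"
    then obtain n where x: "x = (\<sigma> ^^ n) i" unfolding orb_def by auto
    have "(\<sigma> ^^ (n + m - 1)) (\<sigma> i) = (\<sigma> ^^ (n + m)) i"
      using m(2) by (metis Suc_diff_1 add_gr_0 comp_apply funpow_Suc_right)
    also have "\<dots> = x" using m x by (simp add: funpow_add)
    finally show "x \<in> orb (\<sigma> i)" unfolding orb_def by (metis rangeI)
  qed
qed

lemma orb_iter: "orb ((\<sigma> ^^ n) i) = orb i"
  by (induction n) (auto simp: orb_step)

lemma rep_in: "i \<in> I \<Longrightarrow> rep i \<in> orb i"
  unfolding rep_def using orb_fin by (auto intro!: Min_in simp: orb_def)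

lemma rep_I: "i \<in> I \<Longrightarrow> rep i \<in> I"
  using rep_in orb_sub by blast

lemma rep_step: "rep (\<sigma> i) = rep i"
  unfolding rep_def orb_step ..

lemma rep_iter: "rep ((\<sigma> ^^ n) i) = rep i"
  unfolding rep_def orb_iter ..

lemma rep_inv: "rep (inv' \<sigma> i) = rep i"
  using rep_step[of "inv' \<sigma> i"] by (simp add: permutes_inverses[OF perm])

lemma rep_rep: "i \<in> I \<Longrightarrow> rep (rep i) = rep i"
  using rep_in[of i] unfolding orb_def by (auto simp: rep_iter)

lemma rep_S: "i \<in> I \<Longrightarrow> rep i \<in> S"
  unfolding S_def using rep_I rep_rep by auto

lemma reach: assumes "i \<in> I" shows "\<exists>n>0. (\<sigma> ^^ n) i = rep i"
proof -
  obtain m where m: "\<sigma> ^^ m = id" "m > 0" using nil by blast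
  obtain n where n: "(\<sigma> ^^ n) i = rep i" using rep_in[OF assms] unfolding orb_def by auto
  have "(\<sigma> ^^ (n + m)) i = rep i" using m n by (simp add: funpow_add)
  thus ?thesis using m by (intro exI[of _ "n+m"]) auto
qed

lemma S_sub: "S \<subseteq> I" unfolding S_def by auto

lemma S_card: "2 * card S \<le> card I"
proof -
  have disj: "S \<inter> \<sigma> ` S = {}"
  proof (rule ccontr)
    assume "S \<inter> \<sigma> ` S \<noteq> {}"
    then obtain s where s: "s \<in> S" "\<sigma> s \<in> S" by blast
    have sI: "s \<in> I" using s(1) S_sub by blast
    have "\<sigma> s = rep (\<sigma> s)" using s(2) unfolding S_def by simp
    also have "\<dots> = rep s" by (rule rep_step)
    also have "\<dots> = s" using s(1) unfolding S_def by simp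
    finally show False using fp[OF sI] by simp
  qed
  have fS: "finite S" using fin S_sub finite_subset by blast
  have "\<sigma> ` S \<subseteq> I"
  proof
    fix x assume "x \<in> \<sigma> ` S"
    then obtain s where "s \<in> S" "x = \<sigma> s" by blast
    thus "x \<in> I" using S_sub permutes_in_image[OF perm] by blast
  qed
  hence "S \<union> \<sigma> ` S \<subseteq> I" using S_sub by blast
  hence "card (S \<union> \<sigma> ` S) \<le> card I" using fin by (rule card_mono[rotated])
  moreover have "card (S \<union> \<sigma> ` S) = card S + card (\<sigma> ` S)"
    using disj fS by (intro card_Un_disjoint) auto
  moreover have "card (\<sigma> ` S) = card S"
    using permutes_inj[OF perm] by (intro card_image) (simp add: inj_on_def inj_def)
  ultimately show ?thesis by simp
qed

lemma const_orb:
  assumes "\<And>i. i \<in> I \<Longrightarrow> t (\<sigma> i) = t i" "i \<in> I"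
  shows "t (rep i) = t i"
proof -
  have "t ((\<sigma> ^^ n) i) = t i" for n
    by (induction n) (auto simp: assms iter_in)
  thus ?thesis using reach[OF assms(2)] by metis
qed

definition d where "d i = (LEAST n. n > 0 \<and> (\<sigma> ^^ n) i \<in> S)"

lemma d_ex: "i \<in> I \<Longrightarrow> \<exists>n. n > 0 \<and> (\<sigma> ^^ n) i \<in> S"
  using reach rep_S by metis

lemma d_prop: "i \<in> I \<Longrightarrow> d i > 0 \<and> (\<sigma> ^^ d i) i \<in> S"
  unfolding d_def by (rule LeastI_ex) (rule d_ex)

lemma d_step: assumes "i \<in> I" "\<sigma> i \<notin> S" shows "d (\<sigma> i) < d i"
proof -
  have p: "d i > 0" "(\<sigma> ^^ d i) i \<in> S" using d_prop[OF assms(1)] by auto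
  have "d i \<noteq> 1" using p assms(2) by auto
  hence "d i - 1 > 0" using p by auto
  moreover have "(\<sigma> ^^ (d i - 1)) (\<sigma> i) \<in> S"
    using p by (metis Suc_diff_1 comp_apply funpow_Suc_right)
  ultimately have "d (\<sigma> i) \<le> d i - 1" unfolding d_def by (intro Least_le) auto
  thus ?thesis using p by auto
qed

end


definition ccl :: "('a, 'b) monoid_scheme \<Rightarrow> 'a \<Rightarrow> 'a set" where
  "ccl H x = {g \<otimes>\<^bsub>H\<^esub> x \<otimes>\<^bsub>H\<^esub> inv\<^bsub>H\<^esub> g | g. g \<in> carrier H}"

lemma num_conj_classes_ccl: "num_conj_classes H = card (ccl H ` carrier H)"
  unfolding num_conj_classes_def ccl_def ..

context group
begin

lemma inv_cancel_l': "g \<in> carrier G \<Longrightarrow> z \<in> carrier G \<Longrightarrow> inv g \<otimes> (g \<otimes> z) = z"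
  by (simp add: m_assoc[symmetric])

lemma ccl_refl: "x \<in> carrier G \<Longrightarrow> x \<in> ccl G x"
  unfolding ccl_def by (rule CollectI, rule exI[of _ \<one>]) auto

lemma ccl_sub: "x \<in> carrier G \<Longrightarrow> ccl G x \<subseteq> carrier G"
  unfolding ccl_def by auto

lemma ccl_conj: "x \<in> carrier G \<Longrightarrow> g \<in> carrier G \<Longrightarrow> g \<otimes> x \<otimes> inv g \<in> ccl G x"
  unfolding ccl_def by auto

lemma ccl_eq: assumes x: "x \<in> carrier G" and y: "y \<in> ccl G x" shows "ccl G y = ccl G x"
proof -
  obtain g where g: "g \<in> carrier G" "y = g \<otimes> x \<otimes> inv g" using y unfolding ccl_def by auto
  show ?thesis
  proof
    show "ccl G y \<subseteq> ccl G x"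
    proof
      fix z assume "z \<in> ccl G y"
      then obtain h where h: "h \<in> carrier G" "z = h \<otimes> y \<otimes> inv h" unfolding ccl_def by auto
      have "z = (h \<otimes> g) \<otimes> x \<otimes> inv (h \<otimes> g)"
        using g h x by (simp add: inv_mult_group m_assoc inv_cancel_l')
      thus "z \<in> ccl G x" using g h x ccl_conj by auto
    qed
  next
    show "ccl G x \<subseteq> ccl G y"
    proof
      fix z assume "z \<in> ccl G x"
      then obtain h where h: "h \<in> carrier G" "z = h \<otimes> x \<otimes> inv h" unfolding ccl_def by auto
      have "(h \<otimes> inv g) \<otimes> y \<otimes> inv (h \<otimes> inv g) = h \<otimes> (inv g \<otimes> g) \<otimes> x \<otimes> (inv g \<otimes> g) \<otimes> inv h"
        using g h x by (simp add: inv_mult_group m_assoc inv_cancel_l')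
      hence "z = (h \<otimes> inv g) \<otimes> y \<otimes> inv (h \<otimes> inv g)"
        using g h x by (simp add: m_assoc inv_cancel_l')
      thus "z \<in> ccl G y" using g h x ccl_conj by auto
    qed
  qed
qed

lemma ccl_eq_iff: "x \<in> carrier G \<Longrightarrow> y \<in> carrier G \<Longrightarrow> ccl G x = ccl G y \<longleftrightarrow> y \<in> ccl G x"
  using ccl_eq ccl_refl by metis

end

locale wr = group A for A (structure) +
  fixes r :: nat and P :: "(nat \<Rightarrow> nat) set"
  assumes finA: "finite (carrier A)" and reg: "regular_perm_group r P"
begin

definition "I = {1..r}"
lemma I_fin: "finite I" unfolding I_def by simp
lemma I_card: "card I = r" unfolding I_def by simp
abbreviation "G \<equiv> wreath A r P"
abbreviation "Nf \<equiv> I \<rightarrow>\<^sub>E carrier A"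

lemma subP: "subgroup P (sym_group r)" using reg unfolding regular_perm_group_def by (rule conjunct1)

lemma regP: "\<forall>i\<in>I. \<forall>j\<in>I. \<exists>!\<sigma>. \<sigma> \<in> P \<and> \<sigma> i = j"
  using reg unfolding regular_perm_group_def I_def by (rule conjunct2)

lemma P_perm: "p \<in> P \<Longrightarrow> p permutes I"
proof -
  assume "p \<in> P"
  hence "p \<in> carrier (sym_group r)" using subgroup.subset[OF subP] by blast
  thus ?thesis by (simp add: sym_group_carrier I_def)
qed

lemma P_id: "id \<in> P"
  using subgroup.one_closed[OF subP] by (simp add: sym_group_one)

lemma P_comp: "p \<in> P \<Longrightarrow> q \<in> P \<Longrightarrow> p \<circ> q \<in> P"
  using subgroup.m_closed[OF subP] by (simp add: sym_group_mult)

lemma P_inv: "p \<in> P \<Longrightarrow> inv' p \<in> P"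
proof -
  assume p: "p \<in> P"
  have "p \<in> carrier (sym_group r)" using p subgroup.subset[OF subP] by blast
  hence "inv\<^bsub>sym_group r\<^esub> p = inv' p" by (rule sym_group_inv_equality)
  moreover have "inv\<^bsub>sym_group r\<^esub> p \<in> P" using subgroup.m_inv_closed[OF subP p] .
  ultimately show ?thesis by simp
qed

lemma ex1_eq: "\<exists>!x. Q x \<Longrightarrow> Q a \<Longrightarrow> Q b \<Longrightarrow> a = b" by blast

lemma P_uniq: assumes "p \<in> P" "q \<in> P" "i \<in> I" "p i = q i" shows "p = q"
proof -
  have "p i \<in> I" using permutes_in_image[OF P_perm[OF assms(1)]] assms(3) by simp
  hence "\<exists>!\<sigma>. \<sigma> \<in> P \<and> \<sigma> i = p i" using regP assms(3) by blast
  thus ?thesis by (rule ex1_eq) (use assms in simp_all)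
qed

lemma P_fpf: assumes "p \<in> P" "p \<noteq> id" "i \<in> I" shows "p i \<noteq> i"
proof
  assume "p i = i"
  hence "p i = id i" by simp
  hence "p = id" using P_uniq[OF assms(1) P_id assms(3)] by blast
  thus False using assms(2) by blast
qed

lemma P_fin: "finite P"
proof -
  have "P \<subseteq> {p. p permutes I}" using P_perm by auto
  moreover have "finite {p. p permutes I}" by (rule finite_permutations) (rule I_fin)
  ultimately show ?thesis by (rule finite_subset)
qed

lemma P_card: "r \<ge> 1 \<Longrightarrow> card P = r"
proof -
  assume r: "r \<ge> 1"
  have one: "(1::nat) \<in> I" using r by (simp add: I_def)
  have "bij_betw (\<lambda>p. p 1) P I"
  proof (rule bij_betwI')
    show "(x 1 = y 1) = (x = y)" if "x \<in> P" "y \<in> P" for x y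
      using P_uniq[OF that one] by blast
    show "x 1 \<in> I" if "x \<in> P" for x
      using permutes_in_image[OF P_perm[OF that]] one by simp
    show "\<exists>x\<in>P. y = x 1" if "y \<in> I" for y
    proof -
      have "\<exists>!x. x \<in> P \<and> x 1 = y" using regP that one by blast
      then obtain x where "x \<in> P" "x 1 = y" by blast
      thus ?thesis by blast
    qed
  qed
  hence "card P = card I" by (rule bij_betw_same_card)
  thus ?thesis by (simp add: I_card)
qed

lemma inv_in: "p \<in> P \<Longrightarrow> i \<in> I \<Longrightarrow> inv' p i \<in> I"
  using permutes_in_image[OF permutes_inv[OF P_perm]] by simp
lemma app_in: "p \<in> P \<Longrightarrow> i \<in> I \<Longrightarrow> p i \<in> I"
  using permutes_in_image[OF P_perm] by simp
lemma inv_app: "p \<in> P \<Longrightarrow> inv' p (p i) = i"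
  using permutes_inverses(2)[OF P_perm] by simp
lemma app_inv: "p \<in> P \<Longrightarrow> p (inv' p i) = i"
  using permutes_inverses(1)[OF P_perm] by simp

lemma G_carrier: "carrier G = {(f, \<sigma>). f \<in> Nf \<and> \<sigma> \<in> P}"
  unfolding wreath_def I_def by simp
lemma G_mult: "(f, \<sigma>) \<otimes>\<^bsub>G\<^esub> (g, \<tau>) = (\<lambda>i\<in>I. f i \<otimes> g (inv' \<sigma> i), \<sigma> \<circ> \<tau>)"
  unfolding wreath_def I_def by simp
lemma G_one: "\<one>\<^bsub>G\<^esub> = (\<lambda>i\<in>I. \<one>, id)"
  unfolding wreath_def I_def by simp

definition winv where "winv x = (\<lambda>i\<in>I. inv (fst x (snd x i)), inv' (snd x))"

lemma Nf_I: "(\<And>i. i \<in> I \<Longrightarrow> h i \<in> carrier A) \<Longrightarrow> (\<lambda>i\<in>I. h i) \<in> Nf"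
  by (simp add: PiE_iff)

lemma Nf_D: "f \<in> Nf \<Longrightarrow> i \<in> I \<Longrightarrow> f i \<in> carrier A"
  by (simp add: PiE_iff)

lemma Nf_ext: "f \<in> Nf \<Longrightarrow> (\<lambda>i\<in>I. f i) = f"
  by (simp add: PiE_iff extensional_restrict)

lemma winv_eq: assumes "f \<in> Nf" "\<sigma> \<in> P"
  shows "winv (f, \<sigma>) \<in> carrier G" "winv (f, \<sigma>) \<otimes>\<^bsub>G\<^esub> (f, \<sigma>) = \<one>\<^bsub>G\<^esub>"
proof -
  have "(\<lambda>i\<in>I. inv f (\<sigma> i)) \<in> Nf"
  proof (rule Nf_I)
    fix i assume "i \<in> I"
    thus "inv f (\<sigma> i) \<in> carrier A" using Nf_D[OF assms(1) app_in[OF assms(2)]] by simp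
  qed
  thus "winv (f, \<sigma>) \<in> carrier G"
    unfolding winv_def G_carrier using P_inv[OF assms(2)] by simp
  have ii: "inv' (inv' \<sigma>) = \<sigma>" using permutes_inv_inv[OF P_perm[OF assms(2)]] .
  have c: "inv' \<sigma> \<circ> \<sigma> = id" using permutes_inv_o(2)[OF P_perm[OF assms(2)]] .
  have "(\<lambda>i\<in>I. (\<lambda>i\<in>I. inv f (\<sigma> i)) i \<otimes> f (inv' (inv' \<sigma>) i)) = (\<lambda>i\<in>I. \<one>)"
  proof (rule restrict_ext)
    fix i assume i: "i \<in> I"
    have "f (\<sigma> i) \<in> carrier A" using Nf_D[OF assms(1) app_in[OF assms(2) i]] .
    thus "(\<lambda>i\<in>I. inv f (\<sigma> i)) i \<otimes> f (inv' (inv' \<sigma>) i) = \<one>" using i ii by simp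
  qed
  thus "winv (f, \<sigma>) \<otimes>\<^bsub>G\<^esub> (f, \<sigma>) = \<one>\<^bsub>G\<^esub>"
    unfolding winv_def G_one by (simp add: G_mult c)
qed

lemma G_group: "group G"
proof (rule groupI)
  fix x y assume "x \<in> carrier G" "y \<in> carrier G"
  then obtain f \<sigma> g \<tau> where xy: "x = (f, \<sigma>)" "y = (g, \<tau>)"
    "f \<in> Nf" "g \<in> Nf" "\<sigma> \<in> P" "\<tau> \<in> P"
    by (auto simp: G_carrier)
  have "(\<lambda>i\<in>I. f i \<otimes> g (inv' \<sigma> i)) \<in> Nf"
  proof (rule Nf_I)
    fix i assume i: "i \<in> I"
    have j: "inv' \<sigma> i \<in> I" using inv_in[OF xy(5) i] .
    show "f i \<otimes> g (inv' \<sigma> i) \<in> carrier A" using Nf_D[OF xy(3) i] Nf_D[OF xy(4) j] by simp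
  qed
  thus "x \<otimes>\<^bsub>G\<^esub> y \<in> carrier G"
    using xy by (simp add: G_carrier G_mult P_comp)
next
  show "\<one>\<^bsub>G\<^esub> \<in> carrier G" by (simp add: G_carrier G_one P_id PiE_iff)
next
  fix x y z assume "x \<in> carrier G" "y \<in> carrier G" "z \<in> carrier G"
  then obtain f \<sigma> g \<tau> h \<rho> where xyz: "x = (f, \<sigma>)" "y = (g, \<tau>)" "z = (h, \<rho>)"
    "f \<in> Nf" "g \<in> Nf" "h \<in> Nf" "\<sigma> \<in> P" "\<tau> \<in> P" "\<rho> \<in> P"
    by (auto simp: G_carrier)
  have io: "inv' (\<sigma> \<circ> \<tau>) = inv' \<tau> \<circ> inv' \<sigma>"
    using o_inv_distrib[OF permutes_bij[OF P_perm[OF xyz(7)]] permutes_bij[OF P_perm[OF xyz(8)]]] .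
  have "(\<lambda>i\<in>I. (\<lambda>i\<in>I. f i \<otimes> g (inv' \<sigma> i)) i \<otimes> h (inv' (\<sigma> \<circ> \<tau>) i))
      = (\<lambda>i\<in>I. f i \<otimes> (\<lambda>i\<in>I. g i \<otimes> h (inv' \<tau> i)) (inv' \<sigma> i))"
  proof (rule restrict_ext)
    fix i assume i: "i \<in> I"
    have j: "inv' \<sigma> i \<in> I" using inv_in[OF xyz(7) i] .
    have k: "inv' \<tau> (inv' \<sigma> i) \<in> I" using inv_in[OF xyz(8) j] .
    have m: "f i \<in> carrier A" "g (inv' \<sigma> i) \<in> carrier A" "h (inv' \<tau> (inv' \<sigma> i)) \<in> carrier A"
      using Nf_D xyz i j k by auto
    show "(\<lambda>i\<in>I. f i \<otimes> g (inv' \<sigma> i)) i \<otimes> h (inv' (\<sigma> \<circ> \<tau>) i)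
      = f i \<otimes> (\<lambda>i\<in>I. g i \<otimes> h (inv' \<tau> i)) (inv' \<sigma> i)"
      using i j m by (simp add: io m_assoc)
  qed
  thus "(x \<otimes>\<^bsub>G\<^esub> y) \<otimes>\<^bsub>G\<^esub> z = x \<otimes>\<^bsub>G\<^esub> (y \<otimes>\<^bsub>G\<^esub> z)"
    using xyz by (simp add: G_mult comp_assoc)
next
  fix x assume "x \<in> carrier G"
  then obtain f \<sigma> where x: "x = (f, \<sigma>)" "f \<in> Nf" "\<sigma> \<in> P" by (auto simp: G_carrier)
  have "(\<lambda>i\<in>I. (\<lambda>i\<in>I. \<one>) i \<otimes> f (inv' id i)) = (\<lambda>i\<in>I. f i)"
    by (rule restrict_ext) (use x in \<open>simp add: inv_id Nf_D\<close>)
  thus "\<one>\<^bsub>G\<^esub> \<otimes>\<^bsub>G\<^esub> x = x" using x by (simp add: G_one G_mult Nf_ext)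
next
  fix x assume "x \<in> carrier G"
  then obtain f \<sigma> where x: "x = (f, \<sigma>)" "f \<in> Nf" "\<sigma> \<in> P" by (auto simp: G_carrier)
  thus "\<exists>y\<in>carrier G. y \<otimes>\<^bsub>G\<^esub> x = \<one>\<^bsub>G\<^esub>" using winv_eq by blast
qed

lemma G_inv: assumes "f \<in> Nf" "\<sigma> \<in> P"
  shows "inv\<^bsub>G\<^esub> (f, \<sigma>) = (\<lambda>i\<in>I. inv (f (\<sigma> i)), inv' \<sigma>)"
proof -
  have "(f, \<sigma>) \<in> carrier G" using assms by (simp add: G_carrier)
  hence "inv\<^bsub>G\<^esub> (f, \<sigma>) = winv (f, \<sigma>)"
    using group.inv_equality[OF G_group winv_eq(2)[OF assms] _ winv_eq(1)[OF assms]] by blast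
  thus ?thesis by (simp add: winv_def)
qed

lemma conj1: assumes "f \<in> Nf" "g \<in> Nf" "\<sigma> \<in> P"
  shows "(g, id) \<otimes>\<^bsub>G\<^esub> (f, \<sigma>) \<otimes>\<^bsub>G\<^esub> inv\<^bsub>G\<^esub> (g, id)
       = (\<lambda>i\<in>I. g i \<otimes> f i \<otimes> inv (g (inv' \<sigma> i)), \<sigma>)"
proof -
  have "(\<lambda>i\<in>I. (\<lambda>i\<in>I. g i \<otimes> f (inv' id i)) i \<otimes> (\<lambda>i\<in>I. inv g (id i)) (inv' (id \<circ> \<sigma>) i))
     = (\<lambda>i\<in>I. g i \<otimes> f i \<otimes> inv (g (inv' \<sigma> i)))"
  proof (rule restrict_ext)
    fix i assume i: "i \<in> I"
    have j: "inv' \<sigma> i \<in> I" using inv_in[OF assms(3) i] .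
    show "(\<lambda>i\<in>I. g i \<otimes> f (inv' id i)) i \<otimes> (\<lambda>i\<in>I. inv g (id i)) (inv' (id \<circ> \<sigma>) i)
     = g i \<otimes> f i \<otimes> inv (g (inv' \<sigma> i))" using i j by (simp add: inv_id)
  qed
  thus ?thesis using assms by (simp add: G_inv P_id G_mult inv_id)
qed

lemma conj2: assumes "f \<in> Nf" "g \<in> Nf" "q \<in> P"
  shows "(g, q) \<otimes>\<^bsub>G\<^esub> (f, id) \<otimes>\<^bsub>G\<^esub> inv\<^bsub>G\<^esub> (g, q)
       = (\<lambda>i\<in>I. g i \<otimes> f (inv' q i) \<otimes> inv (g i), id)"
proof -
  have c: "q \<circ> inv' q = id" using permutes_inv_o(1)[OF P_perm[OF assms(3)]] .
  have "(\<lambda>i\<in>I. (\<lambda>i\<in>I. g i \<otimes> f (inv' q i)) i \<otimes> (\<lambda>i\<in>I. inv g (q i)) (inv' (q \<circ> id) i))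
     = (\<lambda>i\<in>I. g i \<otimes> f (inv' q i) \<otimes> inv (g i))"
  proof (rule restrict_ext)
    fix i assume i: "i \<in> I"
    have j: "inv' q i \<in> I" using inv_in[OF assms(3) i] .
    show "(\<lambda>i\<in>I. g i \<otimes> f (inv' q i)) i \<otimes> (\<lambda>i\<in>I. inv g (q i)) (inv' (q \<circ> id) i)
     = g i \<otimes> f (inv' q i) \<otimes> inv (g i)" using i j by (simp add: app_inv[OF assms(3)])
  qed
  thus ?thesis using assms by (simp add: G_inv G_mult c)
qed

end


context wr
begin

definition "CA = ccl A ` carrier A"
definition "T = I \<rightarrow>\<^sub>E CA"
definition "ct f = (\<lambda>i\<in>I. ccl A (f i))"
definition "act t q = (\<lambda>i\<in>I. t (q i))"
definition "orbit t = act t ` P"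

lemma CA_fin: "finite CA" unfolding CA_def using finA by simp

lemma T_fin: "finite T" unfolding T_def using CA_fin by (simp add: finite_PiE I_fin)

lemma T_card: "card T = card CA ^ r"
  unfolding T_def by (simp add: card_PiE I_fin I_card)

lemma ct_T: "f \<in> Nf \<Longrightarrow> ct f \<in> T"
  unfolding ct_def T_def CA_def by (auto simp: PiE_iff)

lemma ct_surj: "T \<subseteq> ct ` Nf"
proof
  fix t assume t: "t \<in> T"
  define f where "f = (\<lambda>i\<in>I. SOME x. x \<in> carrier A \<and> t i = ccl A x)"
  have ex: "\<exists>x. x \<in> carrier A \<and> t i = ccl A x" if "i \<in> I" for i
  proof -
    have "t i \<in> ccl A ` carrier A" using PiE_mem[OF t[unfolded T_def] that] unfolding CA_def .
    thus ?thesis by blast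
  qed
  have fi: "f i \<in> carrier A \<and> t i = ccl A (f i)" if "i \<in> I" for i
    using someI_ex[OF ex[OF that]] that unfolding f_def by simp
  have "f \<in> Nf" unfolding f_def by (rule Nf_I) (use fi f_def in auto)
  moreover have "ct f = t"
  proof
    fix i show "ct f i = t i"
    proof (cases "i \<in> I")
      case True thus ?thesis using fi[OF True] by (simp add: ct_def)
    next
      case False thus ?thesis using t unfolding ct_def T_def by (simp add: PiE_iff extensional_def)
    qed
  qed
  ultimately show "t \<in> ct ` Nf" by blast
qed

lemma ct_image: "ct ` Nf = T" using ct_T ct_surj by blast

lemma act_T: assumes "t \<in> T" "q \<in> P" shows "act t q \<in> T"
  unfolding act_def T_def restrict_PiE_iff
proof
  fix i assume "i \<in> I"
  thus "t (q i) \<in> CA" using PiE_mem[OF assms(1)[unfolded T_def] app_in[OF assms(2)]] by simp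
qed

lemma act_id: "t \<in> T \<Longrightarrow> act t id = t"
  unfolding act_def T_def by (simp add: PiE_iff extensional_restrict)

lemma act_act: assumes "q \<in> P" "p \<in> P" shows "act (act t q) p = act t (q \<circ> p)"
  unfolding act_def
proof (rule restrict_ext)
  fix i assume i: "i \<in> I"
  have "p i \<in> I" using app_in[OF assms(2) i] .
  thus "(\<lambda>i\<in>I. t (q i)) (p i) = t ((q \<circ> p) i)" by simp
qed

lemma orbit_T: "t \<in> T \<Longrightarrow> orbit t \<subseteq> T"
  unfolding orbit_def using act_T by blast

lemma orbit_self: "t \<in> T \<Longrightarrow> t \<in> orbit t"
  unfolding orbit_def using act_id P_id by (metis image_eqI)

lemma orbit_eq: assumes t: "t \<in> T" and u: "u \<in> orbit t" shows "orbit u = orbit t"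
proof -
  obtain q where q: "q \<in> P" "u = act t q" using u unfolding orbit_def by blast
  show ?thesis
  proof
    show "orbit u \<subseteq> orbit t"
    proof
      fix v assume "v \<in> orbit u"
      then obtain p where p: "p \<in> P" "v = act u p" unfolding orbit_def by blast
      hence "v = act t (q \<circ> p)" using q act_act by simp
      thus "v \<in> orbit t" unfolding orbit_def using P_comp[OF q(1) p(1)] by blast
    qed
  next
    show "orbit t \<subseteq> orbit u"
    proof
      fix v assume "v \<in> orbit t"
      then obtain p where p: "p \<in> P" "v = act t p" unfolding orbit_def by blast
      have iq: "inv' q \<in> P" using P_inv[OF q(1)] .
      have qq: "q \<circ> (inv' q \<circ> p) = p"
        using permutes_inv_o(1)[OF P_perm[OF q(1)]] by (simp add: comp_assoc[symmetric])
      have "act u (inv' q \<circ> p) = act t (q \<circ> (inv' q \<circ> p))" using q act_act[OF q(1) P_comp[OF iq p(1)]] by simp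
      hence "v = act u (inv' q \<circ> p)" using qq p by simp
      thus "v \<in> orbit u" unfolding orbit_def using P_comp[OF iq p(1)] by blast
    qed
  qed
qed

lemma orbit_card: "r \<ge> 1 \<Longrightarrow> card (orbit t) \<le> r"
  unfolding orbit_def using card_image_le[OF P_fin, of "act t"] P_card by simp


lemma G_ccl_mem: "x \<in> carrier G \<Longrightarrow> g \<in> carrier G \<Longrightarrow> g \<otimes>\<^bsub>G\<^esub> x \<otimes>\<^bsub>G\<^esub> inv\<^bsub>G\<^esub> g \<in> ccl G x"
  unfolding ccl_def by blast

lemma ccl_A_conj: "x \<in> carrier A \<Longrightarrow> h \<in> carrier A \<Longrightarrow> ccl A (h \<otimes> x \<otimes> inv h) = ccl A x"
  using ccl_eq ccl_conj by blast

lemma base_elem: assumes f: "f \<in> Nf" and y: "y \<in> ccl G (f, id)"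
  obtains q where "q \<in> P" "snd y = id" "fst y \<in> Nf" "ct (fst y) = act (ct f) (inv' q)"
proof -
  obtain g where g: "g \<in> carrier G" "y = g \<otimes>\<^bsub>G\<^esub> (f, id) \<otimes>\<^bsub>G\<^esub> inv\<^bsub>G\<^esub> g"
    using y unfolding ccl_def by blast
  obtain h q where hq: "g = (h, q)" "h \<in> Nf" "q \<in> P" using g(1) by (auto simp: G_carrier)
  have y': "y = (\<lambda>i\<in>I. h i \<otimes> f (inv' q i) \<otimes> inv (h i), id)"
    using g(2) hq conj2[OF f hq(2) hq(3)] by simp
  have m: "h i \<in> carrier A" "f (inv' q i) \<in> carrier A" "inv' q i \<in> I" if "i \<in> I" for i
    using Nf_D[OF hq(2) that] Nf_D[OF f inv_in[OF hq(3) that]] inv_in[OF hq(3) that] by auto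
  have "fst y \<in> Nf" unfolding y' fst_conv by (rule Nf_I) (use m in simp)
  moreover have "ct (fst y) = act (ct f) (inv' q)"
    unfolding y' fst_conv ct_def act_def
  proof (rule restrict_ext)
    fix i assume i: "i \<in> I"
    show "ccl A ((\<lambda>i\<in>I. h i \<otimes> f (inv' q i) \<otimes> inv h i) i) = (\<lambda>i\<in>I. ccl A (f i)) (inv' q i)"
      using i m[OF i] ccl_A_conj by simp
  qed
  ultimately show ?thesis using that[OF hq(3)] y' by simp
qed

lemma base_orbit: assumes f: "f \<in> Nf" shows "(ct \<circ> fst) ` ccl G (f, id) = orbit (ct f)"
proof
  show "(ct \<circ> fst) ` ccl G (f, id) \<subseteq> orbit (ct f)"
  proof
    fix z assume "z \<in> (ct \<circ> fst) ` ccl G (f, id)"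
    then obtain y where y: "y \<in> ccl G (f, id)" "z = ct (fst y)" by auto
    obtain q where "q \<in> P" "ct (fst y) = act (ct f) (inv' q)" using base_elem[OF f y(1)] by blast
    thus "z \<in> orbit (ct f)" unfolding orbit_def using y(2) P_inv by blast
  qed
next
  show "orbit (ct f) \<subseteq> (ct \<circ> fst) ` ccl G (f, id)"
  proof
    fix z assume "z \<in> orbit (ct f)"
    then obtain q where q: "q \<in> P" "z = act (ct f) q" unfolding orbit_def by blast
    define e where "e = (\<lambda>i\<in>I. \<one>)"
    have e: "e \<in> Nf" unfolding e_def by (rule Nf_I) simp
    have iq: "inv' q \<in> P" using P_inv[OF q(1)] .
    have gc: "(e, inv' q) \<in> carrier G" using e iq by (simp add: G_carrier)
    have xc: "(f, id) \<in> carrier G" using f P_id by (simp add: G_carrier)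
    define y where "y = (e, inv' q) \<otimes>\<^bsub>G\<^esub> (f, id) \<otimes>\<^bsub>G\<^esub> inv\<^bsub>G\<^esub> (e, inv' q)"
    have yc: "y \<in> ccl G (f, id)" unfolding y_def using G_ccl_mem[OF xc gc] .
    have ii: "inv' (inv' q) = q" using permutes_inv_inv[OF P_perm[OF q(1)]] .
    have y': "y = (\<lambda>i\<in>I. e i \<otimes> f (q i) \<otimes> inv (e i), id)"
      unfolding y_def using conj2[OF f e iq] ii by simp
    have "ct (fst y) = act (ct f) q"
      unfolding y' fst_conv ct_def act_def
    proof (rule restrict_ext)
      fix i assume i: "i \<in> I"
      have "f (q i) \<in> carrier A" "q i \<in> I" using Nf_D[OF f app_in[OF q(1) i]] app_in[OF q(1) i] by auto
      thus "ccl A ((\<lambda>i\<in>I. e i \<otimes> f (q i) \<otimes> inv e i) i) = (\<lambda>i\<in>I. ccl A (f i)) (q i)"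
        using i by (simp add: e_def)
    qed
    thus "z \<in> (ct \<circ> fst) ` ccl G (f, id)" using yc q(2) by force
  qed
qed

lemma base_conj: assumes f: "f \<in> Nf" and f': "f' \<in> Nf" and eq: "ct f = ct f'"
  shows "(f', id) \<in> ccl G (f, id)"
proof -
  have ex: "\<exists>a. a \<in> carrier A \<and> f' i = a \<otimes> f i \<otimes> inv a" if i: "i \<in> I" for i
  proof -
    have "ccl A (f i) = ccl A (f' i)" using eq i unfolding ct_def by (metis restrict_apply')
    moreover have "f' i \<in> ccl A (f' i)" using ccl_refl Nf_D[OF f' i] by blast
    ultimately show ?thesis unfolding ccl_def by blast
  qed
  define h where "h = (\<lambda>i\<in>I. SOME a. a \<in> carrier A \<and> f' i = a \<otimes> f i \<otimes> inv a)"
  have hi: "h i \<in> carrier A \<and> f' i = h i \<otimes> f i \<otimes> inv (h i)" if "i \<in> I" for i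
    using someI_ex[OF ex[OF that]] that unfolding h_def by simp
  have h: "h \<in> Nf"
  proof -
    have "(\<lambda>i\<in>I. h i) \<in> Nf" by (rule Nf_I) (use hi in blast)
    moreover have "(\<lambda>i\<in>I. h i) = h" unfolding h_def by (rule restrict_ext) simp
    ultimately show ?thesis by simp
  qed
  have gc: "(h, id) \<in> carrier G" using h P_id by (simp add: G_carrier)
  have xc: "(f, id) \<in> carrier G" using f P_id by (simp add: G_carrier)
  have "(h, id) \<otimes>\<^bsub>G\<^esub> (f, id) \<otimes>\<^bsub>G\<^esub> inv\<^bsub>G\<^esub> (h, id) = (\<lambda>i\<in>I. h i \<otimes> f (inv' id i) \<otimes> inv (h i), id)"
    using conj2[OF f h P_id] .
  also have "(\<lambda>i\<in>I. h i \<otimes> f (inv' id i) \<otimes> inv (h i)) = (\<lambda>i\<in>I. f' i)"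
    by (rule restrict_ext) (simp add: inv_id hi)
  also have "(\<lambda>i\<in>I. f' i) = f'" using Nf_ext[OF f'] .
  finally have eq: "(h, id) \<otimes>\<^bsub>G\<^esub> (f, id) \<otimes>\<^bsub>G\<^esub> inv\<^bsub>G\<^esub> (h, id) = (f', id)" .
  have m: "(h, id) \<otimes>\<^bsub>G\<^esub> (f, id) \<otimes>\<^bsub>G\<^esub> inv\<^bsub>G\<^esub> (h, id) \<in> ccl G (f, id)"
    using G_ccl_mem[OF xc gc] .
  show ?thesis using m unfolding eq .
qed

definition "ClN = (\<lambda>f. ccl G (f, id)) ` Nf"

lemma ClN_card: "card ClN = card (orbit ` T)"
proof -
  define \<Phi> :: "((nat \<Rightarrow> 'a) \<times> (nat \<Rightarrow> nat)) set \<Rightarrow> (nat \<Rightarrow> 'a set) set"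
    where "\<Phi> c = (ct \<circ> fst) ` c" for c
  have img: "\<Phi> ` ClN = orbit ` T"
  proof -
    have "\<Phi> ` ClN = (\<lambda>f. orbit (ct f)) ` Nf"
      unfolding ClN_def \<Phi>_def image_image using base_orbit by simp
    also have "\<dots> = orbit ` (ct ` Nf)" by (simp add: image_image)
    finally show ?thesis using ct_image by simp
  qed
  have "inj_on \<Phi> ClN"
  proof (rule inj_onI)
    fix c1 c2 assume c1: "c1 \<in> ClN" and c2: "c2 \<in> ClN" and eq: "\<Phi> c1 = \<Phi> c2"
    obtain f1 where f1: "f1 \<in> Nf" "c1 = ccl G (f1, id)" using c1 unfolding ClN_def by blast
    obtain f2 where f2: "f2 \<in> Nf" "c2 = ccl G (f2, id)" using c2 unfolding ClN_def by blast
    have "ct f2 \<in> orbit (ct f2)" using orbit_self ct_T[OF f2(1)] by blast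
    also have "orbit (ct f2) = \<Phi> c2" using base_orbit[OF f2(1)] f2(2) \<Phi>_def by simp
    also have "\<dots> = \<Phi> c1" using eq by simp
    finally obtain y where y: "y \<in> c1" "ct (fst y) = ct f2" unfolding \<Phi>_def by auto
    obtain q where yq: "snd y = id" "fst y \<in> Nf" using base_elem[OF f1(1)] y(1) f1(2) by metis
    have yy: "y = (fst y, id)" using yq(1) by (metis prod.collapse)
    have x1: "(f1, id) \<in> carrier G" using f1 P_id by (simp add: G_carrier)
    have "ccl G y = ccl G (f1, id)" using group.ccl_eq[OF G_group x1] y(1) f1(2) by blast
    moreover have "(f2, id) \<in> ccl G (fst y, id)" using base_conj[OF yq(2) f2(1) y(2)] .
    moreover have "(fst y, id) \<in> carrier G" using yq(2) P_id by (simp add: G_carrier)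
    ultimately have "ccl G (f2, id) = ccl G (f1, id)" using group.ccl_eq[OF G_group] yy by metis
    thus "c1 = c2" using f1 f2 by simp
  qed
  hence "card (\<Phi> ` ClN) = card ClN" by (rule card_image)
  thus ?thesis using img by simp
qed

end


context wr
begin

definition "Fix q = {t \<in> T. \<forall>i\<in>I. t (q i) = t i}"

lemma Fix_card: assumes q: "q \<in> P" "q \<noteq> id"
  shows "card (Fix q) \<le> card CA ^ card (fpf.S q I)"
proof -
  interpret F: fpf q I
  proof
    show "q permutes I" using P_perm[OF q(1)] .
    show "finite I" using I_fin .
    show "\<And>i. i \<in> I \<Longrightarrow> q i \<noteq> i" using P_fpf[OF q(1) q(2)] .
  qed
  have fS: "finite F.S" using F.S_sub I_fin finite_subset by blast
  have inj: "inj_on (\<lambda>t. restrict t F.S) (Fix q)"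
  proof (rule inj_onI)
    fix t t' assume t: "t \<in> Fix q" and t': "t' \<in> Fix q" and eq: "restrict t F.S = restrict t' F.S"
    show "t = t'"
    proof
      fix i show "t i = t' i"
      proof (cases "i \<in> I")
        case True
        have tf: "\<forall>i\<in>I. t (q i) = t i" using t unfolding Fix_def by blast
        have tf': "\<forall>i\<in>I. t' (q i) = t' i" using t' unfolding Fix_def by blast
        have ct: "t (F.rep i) = t i" using F.const_orb[of t i] tf True by blast
        have ct': "t' (F.rep i) = t' i" using F.const_orb[of t' i] tf' True by blast
        have "F.rep i \<in> F.S" using F.rep_S[OF True] .
        hence "t (F.rep i) = t' (F.rep i)" using fun_cong[OF eq, of "F.rep i"] by simp
        thus ?thesis using ct ct' by simp
      next
        case False
        have "t \<in> T" "t' \<in> T" using t t' unfolding Fix_def by blast+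
        thus ?thesis using False unfolding T_def using PiE_arb by metis
      qed
    qed
  qed
  have sub: "(\<lambda>t. restrict t F.S) ` Fix q \<subseteq> F.S \<rightarrow>\<^sub>E CA"
  proof
    fix x assume "x \<in> (\<lambda>t. restrict t F.S) ` Fix q"
    then obtain t where t: "t \<in> Fix q" "x = restrict t F.S" by blast
    have "t \<in> T" using t by (simp add: Fix_def)
    have "t s \<in> CA" if "s \<in> F.S" for s
    proof -
      have "s \<in> I" using that F.S_sub by blast
      thus ?thesis using PiE_mem[OF \<open>t \<in> T\<close>[unfolded T_def]] by simp
    qed
    thus "x \<in> F.S \<rightarrow>\<^sub>E CA" using t(2) by (simp add: restrict_PiE_iff)
  qed
  have "card (Fix q) = card ((\<lambda>t. restrict t F.S) ` Fix q)" using card_image[OF inj] by simp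
  also have "\<dots> \<le> card (F.S \<rightarrow>\<^sub>E CA)"
    by (rule card_mono[OF _ sub]) (simp add: fS CA_fin finite_PiE)
  also have "\<dots> = card CA ^ card F.S" using fS by (simp add: card_PiE)
  finally show ?thesis .
qed

lemma orbits_lower: assumes r: "r \<ge> 1" shows "card T \<le> r * card (orbit ` T)"
proof -
  have "T \<subseteq> \<Union> (orbit ` T)" using orbit_self by blast
  moreover have "\<Union> (orbit ` T) \<subseteq> T" using orbit_T by blast
  ultimately have "card T = card (\<Union> (orbit ` T))" by (metis subset_antisym)
  also have "\<dots> \<le> sum card (orbit ` T)" by (rule card_Union_le_sum_card)
  also have "\<dots> \<le> of_nat (card (orbit ` T)) * r"
    by (rule sum_bounded_above) (use orbit_card[OF r] in auto)
  also have "\<dots> = card (orbit ` T) * r" by simp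
  finally show ?thesis by (simp add: mult.commute)
qed

lemma orbits_upper: assumes r: "r \<ge> 1"
  shows "r * card (orbit ` T) \<le> card T + r * (\<Sum>q\<in>P - {id}. card (Fix q))"
proof -
  define Ob where "Ob = {ob \<in> orbit ` T. card ob = r}"
  define Os where "Os = {ob \<in> orbit ` T. card ob \<noteq> r}"
  have finO: "finite (orbit ` T)" using T_fin by simp
  have "orbit ` T = Ob \<union> Os" unfolding Ob_def Os_def by blast
  hence "card (orbit ` T) \<le> card Ob + card Os" using card_Un_le[of Ob Os] by simp
  moreover have "r * card Ob \<le> card T"
  proof -
    have pw: "pairwise disjnt Ob"
    proof (rule pairwiseI)
      fix o1 o2 assume o1: "o1 \<in> Ob" and o2: "o2 \<in> Ob" and ne: "o1 \<noteq> o2"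
      obtain t1 where t1: "t1 \<in> T" "o1 = orbit t1" using o1 unfolding Ob_def by blast
      obtain t2 where t2: "t2 \<in> T" "o2 = orbit t2" using o2 unfolding Ob_def by blast
      show "disjnt o1 o2"
      proof (rule ccontr)
        assume "\<not> disjnt o1 o2"
        then obtain x where x: "x \<in> o1" "x \<in> o2" unfolding disjnt_def by blast
        have e1: "orbit x = orbit t1" using orbit_eq[OF t1(1)] x(1) t1(2) by blast
        have e2: "orbit x = orbit t2" using orbit_eq[OF t2(1)] x(2) t2(2) by blast
        have "o1 = o2" using e1 e2 t1(2) t2(2) by simp
        thus False using ne by contradiction
      qed
    qed
    have fin: "finite ob" if obO: "ob \<in> Ob" for ob
    proof -
      obtain t where tt: "t \<in> T" "ob = orbit t" using obO unfolding Ob_def by blast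
      show ?thesis unfolding tt(2) using finite_subset[OF orbit_T[OF tt(1)] T_fin] .
    qed
    have "sum card Ob = card (\<Union> Ob)" using card_Union_disjoint[OF pw fin] by simp
    also have "\<dots> \<le> card T"
    proof (rule card_mono[OF T_fin])
      show "\<Union> Ob \<subseteq> T"
      proof
        fix x assume "x \<in> \<Union> Ob"
        then obtain t where "t \<in> T" "x \<in> orbit t" unfolding Ob_def by blast
        thus "x \<in> T" using orbit_T by blast
      qed
    qed
    moreover have "sum card Ob = card Ob * r"
    proof -
      have "sum card Ob = sum (\<lambda>_. r) Ob" by (rule sum.cong) (auto simp: Ob_def)
      thus ?thesis by simp
    qed
    ultimately show ?thesis by (simp add: mult.commute)
  qed
  moreover have "card Os \<le> (\<Sum>q\<in>P - {id}. card (Fix q))"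
  proof -
    have "Os \<subseteq> orbit ` (\<Union>q\<in>P - {id}. Fix q)"
    proof
      fix ob assume ob: "ob \<in> Os"
      then obtain t where t: "t \<in> T" "ob = orbit t" unfolding Os_def by blast
      have "card (orbit t) \<noteq> r" using ob unfolding Os_def t(2) by simp
      hence "card (orbit t) < card P" using orbit_card[OF r, of t] P_card[OF r] by simp
      have "\<not> inj_on (act t) P"
      proof
        assume "inj_on (act t) P"
        hence "card (act t ` P) = card P" by (rule card_image)
        thus False using \<open>card (orbit t) < card P\<close> unfolding orbit_def by simp
      qed
      then obtain q1 q2 where q: "q1 \<in> P" "q2 \<in> P" "q1 \<noteq> q2" "act t q1 = act t q2"
        unfolding inj_on_def by blast
      define q where "q = q2 \<circ> inv' q1"
      have qP: "q \<in> P" unfolding q_def using P_comp[OF q(2) P_inv[OF q(1)]] .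
      have "q \<noteq> id"
      proof
        assume "q = id"
        hence "q2 \<circ> inv' q1 = id" unfolding q_def .
        hence "q2 \<circ> inv' q1 \<circ> q1 = q1" by simp
        moreover have "inv' q1 \<circ> q1 = id" using permutes_inv_o(2)[OF P_perm[OF q(1)]] .
        ultimately have "q2 = q1" by (simp add: comp_assoc)
        thus False using q(3) by simp
      qed
      moreover have "t \<in> Fix q"
        unfolding Fix_def
      proof (intro CollectI conjI ballI)
        show "t \<in> T" using t(1) .
        fix i assume i: "i \<in> I"
        have j: "inv' q1 i \<in> I" using inv_in[OF q(1) i] .
        have "act t q1 (inv' q1 i) = act t q2 (inv' q1 i)" using q(4) by simp
        hence "t (q1 (inv' q1 i)) = t (q2 (inv' q1 i))" using j unfolding act_def by simp
        thus "t (q i) = t i" unfolding q_def using app_inv[OF q(1)] by simp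
      qed
      ultimately show "ob \<in> orbit ` (\<Union>q\<in>P - {id}. Fix q)" using qP t(2) by blast
    qed
    moreover have finB: "finite (\<Union>q\<in>P - {id}. Fix q)"
      by (rule finite_subset[OF _ T_fin]) (auto simp: Fix_def)
    ultimately have "card Os \<le> card (orbit ` (\<Union>q\<in>P - {id}. Fix q))"
      by (intro card_mono) simp_all
    also have "\<dots> \<le> card (\<Union>q\<in>P - {id}. Fix q)"
      by (rule card_image_le[OF finB])
    also have "\<dots> \<le> (\<Sum>q\<in>P - {id}. card (Fix q))"
      by (rule card_UN_le) (use P_fin in simp)
    finally show ?thesis .
  qed
  ultimately show ?thesis
  proof -
    assume a: "card (orbit ` T) \<le> card Ob + card Os" and b: "r * card Ob \<le> card T"
      and c: "card Os \<le> (\<Sum>q\<in>P - {id}. card (Fix q))"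
    have "r * card (orbit ` T) \<le> r * (card Ob + card Os)" using a by simp
    also have "\<dots> = r * card Ob + r * card Os" by (simp add: algebra_simps)
    also have "\<dots> \<le> card T + r * (\<Sum>q\<in>P - {id}. card (Fix q))" using add_mono[OF b mult_le_mono2[OF c]] .
    finally show ?thesis .
  qed
qed

end


context wr
begin

definition "R = (\<lambda>c. SOME x. x \<in> c) ` CA"

lemma R_card: "card R \<le> card CA" unfolding R_def using card_image_le[OF CA_fin] .

lemma R_fin: "finite R" unfolding R_def using CA_fin by simp

lemma R_rep: assumes x: "x \<in> carrier A" shows "\<exists>a\<in>carrier A. a \<otimes> x \<otimes> inv a \<in> R"
proof -
  have c: "ccl A x \<in> CA" using x unfolding CA_def by blast
  have "x \<in> ccl A x" using ccl_refl[OF x] .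
  hence "(SOME y. y \<in> ccl A x) \<in> ccl A x" by (rule someI)
  then obtain a where a: "a \<in> carrier A" "(SOME y. y \<in> ccl A x) = a \<otimes> x \<otimes> inv a"
    unfolding ccl_def by blast
  have "(SOME y. y \<in> ccl A x) \<in> R" unfolding R_def using c by blast
  thus ?thesis using a by auto
qed

end

locale wrs = wr +
  fixes \<sigma> :: "nat \<Rightarrow> nat"
  assumes sP: "\<sigma> \<in> P" and snid: "\<sigma> \<noteq> id"

sublocale wrs \<subseteq> F: fpf \<sigma> I
proof
  show "\<sigma> permutes I" using P_perm[OF sP] .
  show "finite I" using I_fin .
  show "\<And>i. i \<in> I \<Longrightarrow> \<sigma> i \<noteq> i" using P_fpf[OF sP snid] .
qed

context wrs
begin

definition "B f = {i \<in> I - F.S. f i \<noteq> \<one>}"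
definition "mu f = sum F.d (B f)"

lemma B_fin: "finite (B f)" unfolding B_def using I_fin by simp

lemma inv_ne: "i \<in> I \<Longrightarrow> inv' \<sigma> i \<noteq> i"
  using F.fp[OF inv_in[OF sP]] app_inv[OF sP] by metis

lemma push_step:
  assumes f: "f \<in> Nf" and i: "i \<in> B f"
  shows "\<exists>f1\<in>Nf. mu f1 < mu f \<and> ccl G (f1, \<sigma>) = ccl G (f, \<sigma>)"
proof -
  have iI: "i \<in> I" and iS: "i \<notin> F.S" and fi1: "f i \<noteq> \<one>" using i unfolding B_def by auto
  have fic: "f i \<in> carrier A" using Nf_D[OF f iI] .
  define g where "g = (\<lambda>j\<in>I. if j = i then inv (f i) else \<one>)"
  have g: "g \<in> Nf" unfolding g_def by (rule Nf_I) (use fic in simp)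
  define f1 where "f1 = (\<lambda>j\<in>I. g j \<otimes> f j \<otimes> inv (g (inv' \<sigma> j)))"
  have conj: "(g, id) \<otimes>\<^bsub>G\<^esub> (f, \<sigma>) \<otimes>\<^bsub>G\<^esub> inv\<^bsub>G\<^esub> (g, id) = (f1, \<sigma>)"
    unfolding f1_def using conj1[OF f g sP] .
  have xc: "(f, \<sigma>) \<in> carrier G" using f sP by (simp add: G_carrier)
  have gc: "(g, id) \<in> carrier G" using g P_id by (simp add: G_carrier)
  have mem: "(f1, \<sigma>) \<in> ccl G (f, \<sigma>)" using G_ccl_mem[OF xc gc] unfolding conj .
  have ceq: "ccl G (f1, \<sigma>) = ccl G (f, \<sigma>)" using group.ccl_eq[OF G_group xc mem] .
  have si: "\<sigma> i \<in> I" using app_in[OF sP iI] .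
  have sii: "\<sigma> i \<noteq> i" using F.fp[OF iI] .
  have gv: "g j = (if j = i then inv (f i) else \<one>)" if "j \<in> I" for j
    using that unfolding g_def by simp
  have v1: "f1 i = \<one>"
  proof -
    have "inv' \<sigma> i \<in> I" using inv_in[OF sP iI] .
    hence "g (inv' \<sigma> i) = \<one>" using gv inv_ne[OF iI] by simp
    thus ?thesis unfolding f1_def using iI gv[OF iI] fic by simp
  qed
  have v3: "f1 j = f j" if j: "j \<in> I" "j \<noteq> i" "j \<noteq> \<sigma> i" for j
  proof -
    have "inv' \<sigma> j \<in> I" using inv_in[OF sP j(1)] .
    moreover have "inv' \<sigma> j \<noteq> i" using j(3) app_inv[OF sP, of j] by metis
    ultimately have "g (inv' \<sigma> j) = \<one>" using gv by simp
    thus ?thesis unfolding f1_def using j gv[OF j(1)] Nf_D[OF f j(1)] by simp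
  qed
  have f1N: "f1 \<in> Nf" unfolding f1_def
  proof (rule Nf_I)
    fix j assume j: "j \<in> I"
    have "inv' \<sigma> j \<in> I" using inv_in[OF sP j] .
    thus "g j \<otimes> f j \<otimes> inv (g (inv' \<sigma> j)) \<in> carrier A"
      using Nf_D[OF g j] Nf_D[OF f j] Nf_D[OF g] by simp
  qed
  have Bsub: "B f1 \<subseteq> (B f - {i}) \<union> ({\<sigma> i} - F.S)"
  proof
    fix j assume j: "j \<in> B f1"
    hence jI: "j \<in> I" "j \<notin> F.S" "f1 j \<noteq> \<one>" unfolding B_def by auto
    have "j \<noteq> i" using jI(3) v1 by auto
    show "j \<in> (B f - {i}) \<union> ({\<sigma> i} - F.S)"
    proof (cases "j = \<sigma> i")
      case True thus ?thesis using jI by simp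
    next
      case False
      hence "f j \<noteq> \<one>" using v3[OF jI(1) \<open>j \<noteq> i\<close> False] jI(3) by simp
      thus ?thesis using jI \<open>j \<noteq> i\<close> unfolding B_def by simp
    qed
  qed
  have dlt: "sum F.d ({\<sigma> i} - F.S) < F.d i"
  proof (cases "\<sigma> i \<in> F.S")
    case True thus ?thesis using F.d_prop[OF iI] by simp
  next
    case False
    hence "{\<sigma> i} - F.S = {\<sigma> i}" by blast
    thus ?thesis using F.d_step[OF iI False] by simp
  qed
  have "mu f1 \<le> sum F.d ((B f - {i}) \<union> ({\<sigma> i} - F.S))"
    unfolding mu_def by (rule sum_mono2) (use Bsub B_fin in auto)
  also have "\<dots> \<le> sum F.d (B f - {i}) + sum F.d ({\<sigma> i} - F.S)"
    using sum_Un_nat[of "B f - {i}" "{\<sigma> i} - F.S" F.d] B_fin by simp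
  also have "\<dots> < sum F.d (B f - {i}) + F.d i" using dlt by simp
  also have "\<dots> = mu f" unfolding mu_def using sum.remove[OF B_fin i, of F.d] by simp
  finally show ?thesis using f1N ceq by blast
qed

lemma push:
  assumes f: "f \<in> Nf"
  shows "\<exists>f'\<in>Nf. (\<forall>i\<in>I - F.S. f' i = \<one>) \<and> ccl G (f', \<sigma>) = ccl G (f, \<sigma>)"
  using f
proof (induction "mu f" arbitrary: f rule: less_induct)
  case less
  show ?case
  proof (cases "B f = {}")
    case True
    hence "\<forall>i\<in>I - F.S. f i = \<one>" unfolding B_def by blast
    thus ?thesis using less.prems by blast
  next
    case False
    then obtain i where "i \<in> B f" by blast
    then obtain f1 where f1: "f1 \<in> Nf" "mu f1 < mu f" "ccl G (f1, \<sigma>) = ccl G (f, \<sigma>)"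
      using push_step[OF less.prems] by blast
    obtain f' where "f' \<in> Nf" "\<forall>i\<in>I - F.S. f' i = \<one>" "ccl G (f', \<sigma>) = ccl G (f1, \<sigma>)"
      using less.hyps[OF f1(2) f1(1)] by blast
    thus ?thesis using f1(3) by auto
  qed
qed


definition "ext \<phi> = (\<lambda>j\<in>I. if j \<in> F.S then \<phi> j else \<one>)"

lemma normalize:
  assumes f: "f \<in> Nf" and f1: "\<forall>i\<in>I - F.S. f i = \<one>"
  shows "\<exists>h\<in>ext ` (F.S \<rightarrow>\<^sub>E R). ccl G (h, \<sigma>) = ccl G (f, \<sigma>)"
proof -
  define a where "a s = (SOME a. a \<in> carrier A \<and> a \<otimes> f s \<otimes> inv a \<in> R)" for s
  have a: "a s \<in> carrier A \<and> a s \<otimes> f s \<otimes> inv (a s) \<in> R" if "s \<in> I" for s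
  proof -
    have "\<exists>b. b \<in> carrier A \<and> b \<otimes> f s \<otimes> inv b \<in> R" using R_rep[OF Nf_D[OF f that]] by blast
    thus ?thesis unfolding a_def by (rule someI_ex)
  qed
  define g where "g = (\<lambda>j\<in>I. a (F.rep j))"
  have g: "g \<in> Nf" unfolding g_def by (rule Nf_I) (use a F.rep_I in blast)
  define h where "h = (\<lambda>j\<in>I. g j \<otimes> f j \<otimes> inv (g (inv' \<sigma> j)))"
  have conj: "(g, id) \<otimes>\<^bsub>G\<^esub> (f, \<sigma>) \<otimes>\<^bsub>G\<^esub> inv\<^bsub>G\<^esub> (g, id) = (h, \<sigma>)"
    unfolding h_def using conj1[OF f g sP] .
  have xc: "(f, \<sigma>) \<in> carrier G" using f sP by (simp add: G_carrier)
  have gc: "(g, id) \<in> carrier G" using g P_id by (simp add: G_carrier)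
  have mem: "(h, \<sigma>) \<in> ccl G (f, \<sigma>)" using G_ccl_mem[OF xc gc] unfolding conj .
  have ceq: "ccl G (h, \<sigma>) = ccl G (f, \<sigma>)" using group.ccl_eq[OF G_group xc mem] .
  have hv: "h j = a (F.rep j) \<otimes> f j \<otimes> inv (a (F.rep j))" if j: "j \<in> I" for j
  proof -
    have "inv' \<sigma> j \<in> I" using inv_in[OF sP j] .
    hence "g (inv' \<sigma> j) = a (F.rep j)" unfolding g_def using F.rep_inv by simp
    thus ?thesis unfolding h_def g_def using j by simp
  qed
  define \<phi> where "\<phi> = restrict h F.S"
  have "\<phi> \<in> F.S \<rightarrow>\<^sub>E R" unfolding \<phi>_def restrict_PiE_iff
  proof
    fix s assume s: "s \<in> F.S"
    hence sI: "s \<in> I" "F.rep s = s" unfolding F.S_def by auto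
    thus "h s \<in> R" using hv[OF sI(1)] a[OF sI(1)] by simp
  qed
  moreover have "ext \<phi> = h" unfolding ext_def \<phi>_def
  proof
    fix j show "(\<lambda>j\<in>I. if j \<in> F.S then restrict h F.S j else \<one>) j = h j"
    proof (cases "j \<in> I")
      case True
      show ?thesis
      proof (cases "j \<in> F.S")
        case True2: True
        thus ?thesis using True by simp
      next
        case False
        have "f j = \<one>" using f1 True False by blast
        moreover have "a (F.rep j) \<in> carrier A" using a[OF F.rep_I[OF True]] by blast
        ultimately show ?thesis using hv[OF True] True False by simp
      qed
    next
      case False thus ?thesis unfolding h_def by simp
    qed
  qed
  ultimately show ?thesis using ceq by blast
qed

lemma coset_card: "card ((\<lambda>f. ccl G (f, \<sigma>)) ` Nf) \<le> card CA ^ card F.S"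
proof -
  have fS: "finite F.S" using F.S_sub I_fin finite_subset by blast
  have "(\<lambda>f. ccl G (f, \<sigma>)) ` Nf \<subseteq> (\<lambda>h. ccl G (h, \<sigma>)) ` (ext ` (F.S \<rightarrow>\<^sub>E R))"
  proof
    fix c assume "c \<in> (\<lambda>f. ccl G (f, \<sigma>)) ` Nf"
    then obtain f where f: "f \<in> Nf" "c = ccl G (f, \<sigma>)" by blast
    obtain f' where f': "f' \<in> Nf" "\<forall>i\<in>I - F.S. f' i = \<one>" "ccl G (f', \<sigma>) = ccl G (f, \<sigma>)"
      using push[OF f(1)] by blast
    obtain h where "h \<in> ext ` (F.S \<rightarrow>\<^sub>E R)" "ccl G (h, \<sigma>) = ccl G (f', \<sigma>)"
      using normalize[OF f'(1) f'(2)] by blast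
    thus "c \<in> (\<lambda>h. ccl G (h, \<sigma>)) ` (ext ` (F.S \<rightarrow>\<^sub>E R))" using f f' by auto
  qed
  hence "card ((\<lambda>f. ccl G (f, \<sigma>)) ` Nf) \<le> card ((\<lambda>h. ccl G (h, \<sigma>)) ` (ext ` (F.S \<rightarrow>\<^sub>E R)))"
    by (rule card_mono[rotated]) (simp add: fS R_fin finite_PiE)
  also have "\<dots> \<le> card (ext ` (F.S \<rightarrow>\<^sub>E R))" by (rule card_image_le) (simp add: fS R_fin finite_PiE)
  also have "\<dots> \<le> card (F.S \<rightarrow>\<^sub>E R)" by (rule card_image_le) (simp add: fS R_fin finite_PiE)
  also have "\<dots> = card R ^ card F.S" using fS by (simp add: card_PiE)
  also have "\<dots> \<le> card CA ^ card F.S" using R_card by (simp add: power_mono)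
  finally show ?thesis .
qed

end


context wr
begin

lemma wrs_I: "q \<in> P \<Longrightarrow> q \<noteq> id \<Longrightarrow> wrs A r P q"
  by (intro wrs.intro wr_axioms; unfold_locales) (use finA reg in auto)

lemma CA_ge1: "card CA \<ge> 1"
proof -
  have "ccl A \<one> \<in> CA" unfolding CA_def by blast
  hence "CA \<noteq> {}" by blast
  thus ?thesis using CA_fin by (simp add: Suc_le_eq card_gt_0_iff)
qed

lemma pow_S_bound: assumes q: "q \<in> P" "q \<noteq> id"
  shows "real (card CA ^ card (fpf.S q I)) \<le> real (card CA) powr (real r / 2)"
proof -
  interpret W: wrs A r P q using wrs_I[OF q] .
  have "2 * card W.F.S \<le> r" using W.F.S_card I_card by simp
  hence le: "real (card W.F.S) \<le> real r / 2" by linarith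
  have k1: "real (card CA) \<ge> 1" using CA_ge1 by simp
  have "real (card CA ^ card W.F.S) = real (card CA) powr real (card W.F.S)"
    using k1 by (simp add: powr_realpow)
  also have "\<dots> \<le> real (card CA) powr (real r / 2)" by (rule powr_mono[OF le k1])
  finally show ?thesis .
qed

lemma sum_S_bound:
  assumes r: "r \<ge> 1"
  shows "(\<Sum>q\<in>P - {id}. real (card CA ^ card (fpf.S q I))) \<le> (real r - 1) * real (card CA) powr (real r / 2)"
proof -
  have "(\<Sum>q\<in>P - {id}. real (card CA ^ card (fpf.S q I))) \<le> of_nat (card (P - {id})) * real (card CA) powr (real r / 2)"
    by (rule sum_bounded_above) (use pow_S_bound in auto)
  moreover have "card (P - {id}) = r - 1" using P_card[OF r] P_id P_fin by simp
  ultimately show ?thesis using r by (simp add: of_nat_diff)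
qed

lemma main:
  assumes r: "r \<ge> 1"
  shows "\<bar>real (num_conj_classes G) - real (num_conj_classes A) ^ r / real r\<bar>
         \<le> 2 * real r * real (num_conj_classes A) powr (real r / 2)"
proof -
  define k where "k = card CA"
  define X where "X = real k powr (real r / 2)"
  have kA: "num_conj_classes A = k" unfolding k_def CA_def num_conj_classes_ccl ..
  define Cl where "Cl = ccl G ` carrier G"
  define ClO where "ClO = (\<Union>\<sigma>\<in>P - {id}. (\<lambda>f. ccl G (f, \<sigma>)) ` Nf)"
  have kG: "num_conj_classes G = card Cl" unfolding Cl_def num_conj_classes_ccl ..
  have finN: "finite Nf" using I_fin finA by (simp add: finite_PiE)
  have finG: "finite (carrier G)"
  proof -
    have "carrier G \<subseteq> Nf \<times> P" by (auto simp: G_carrier)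
    thus ?thesis using finN P_fin finite_subset by blast
  qed
  have finCl: "finite Cl" unfolding Cl_def using finG by simp
  have finClN: "finite ClN" unfolding ClN_def using finN by simp
  have finClO: "finite ClO" unfolding ClO_def using finN P_fin by simp
  have ClN_sub: "ClN \<subseteq> Cl"
    unfolding ClN_def Cl_def using P_id by (auto simp: G_carrier)
  have Cl_sub: "Cl \<subseteq> ClN \<union> ClO"
  proof
    fix c assume "c \<in> Cl"
    then obtain f \<sigma> where x: "f \<in> Nf" "\<sigma> \<in> P" "c = ccl G (f, \<sigma>)" unfolding Cl_def by (auto simp: G_carrier)
    show "c \<in> ClN \<union> ClO"
    proof (cases "\<sigma> = id")
      case True thus ?thesis using x unfolding ClN_def by blast
    next
      case False thus ?thesis using x unfolding ClO_def by blast
    qed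
  qed
  have O_low: "real (k ^ r) \<le> real r * real (card (orbit ` T))"
    using orbits_lower[OF r] T_card unfolding k_def by (metis of_nat_le_iff of_nat_mult)
  have fixsum: "real (\<Sum>q\<in>P - {id}. card (Fix q)) \<le> (real r - 1) * X"
  proof -
    have "real (\<Sum>q\<in>P - {id}. card (Fix q)) = (\<Sum>q\<in>P - {id}. real (card (Fix q)))" by simp
    also have "\<dots> \<le> (\<Sum>q\<in>P - {id}. real (card CA ^ card (fpf.S q I)))"
      by (rule sum_mono) (use Fix_card in force)
    also have "\<dots> \<le> (real r - 1) * X" using sum_S_bound[OF r] unfolding X_def k_def .
    finally show ?thesis .
  qed
  have O_up: "real r * real (card (orbit ` T)) \<le> real (k ^ r) + real r * ((real r - 1) * X)"
  proof -
    have "real r * real (card (orbit ` T)) \<le> real (card T) + real r * real (\<Sum>q\<in>P - {id}. card (Fix q))"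
      using orbits_upper[OF r] by (metis of_nat_add of_nat_le_iff of_nat_mult)
    also have "\<dots> \<le> real (k ^ r) + real r * ((real r - 1) * X)"
      using fixsum T_card unfolding k_def by (intro add_mono mult_left_mono) auto
    finally show ?thesis .
  qed
  have ClO_b: "real (card ClO) \<le> (real r - 1) * X"
  proof -
    have "card ClO \<le> (\<Sum>\<sigma>\<in>P - {id}. card ((\<lambda>f. ccl G (f, \<sigma>)) ` Nf))"
      unfolding ClO_def by (rule card_UN_le) (use P_fin in simp)
    hence "real (card ClO) \<le> (\<Sum>\<sigma>\<in>P - {id}. real (card ((\<lambda>f. ccl G (f, \<sigma>)) ` Nf)))"
      by (metis of_nat_le_iff of_nat_sum)
    also have "\<dots> \<le> (\<Sum>q\<in>P - {id}. real (card CA ^ card (fpf.S q I)))"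
    proof (rule sum_mono)
      fix q assume q: "q \<in> P - {id}"
      interpret W: wrs A r P q using wrs_I q by blast
      show "real (card ((\<lambda>f. ccl G (f, q)) ` Nf)) \<le> real (card CA ^ card (fpf.S q I))"
        using W.coset_card by simp
    qed
    also have "\<dots> \<le> (real r - 1) * X" using sum_S_bound[OF r] unfolding X_def k_def .
    finally show ?thesis .
  qed
  have rpos: "real r > 0" using r by simp
  have Xnn: "X \<ge> 0" unfolding X_def by simp
  have low: "real (card Cl) \<ge> real k ^ r / real r"
  proof -
    have "real (card Cl) \<ge> real (card ClN)" using card_mono[OF finCl ClN_sub] by simp
    moreover have "real (card ClN) = real (card (orbit ` T))" using ClN_card by simp
    moreover have "real k ^ r / real r \<le> real (card (orbit ` T))"
      using O_low rpos by (simp add: divide_le_eq mult.commute)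
    ultimately show ?thesis by linarith
  qed
  have up: "real (card Cl) \<le> real k ^ r / real r + 2 * (real r - 1) * X"
  proof -
    have "card Cl \<le> card (ClN \<union> ClO)" using card_mono[OF _ Cl_sub] finClN finClO by simp
    also have "\<dots> \<le> card ClN + card ClO" by (rule card_Un_le)
    finally have "real (card Cl) \<le> real (card (orbit ` T)) + real (card ClO)"
      using ClN_card by simp
    moreover have "real (card (orbit ` T)) \<le> real k ^ r / real r + (real r - 1) * X"
    proof -
      have "real (card (orbit ` T)) \<le> (real (k ^ r) + real r * ((real r - 1) * X)) / real r"
        using O_up rpos by (simp add: le_divide_eq mult.commute)
      also have "\<dots> = real k ^ r / real r + (real r - 1) * X" using rpos by (simp add: add_divide_distrib)
      finally show ?thesis .
    qed
    ultimately show ?thesis using ClO_b by linarith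
  qed
  have "\<bar>real (card Cl) - real k ^ r / real r\<bar> \<le> 2 * (real r - 1) * X"
    using low up by (simp add: abs_le_iff)
  also have "\<dots> \<le> 2 * real r * X" using Xnn by (simp add: mult_right_mono)
  finally show ?thesis unfolding kG kA X_def .
qed

end

theorem lemma4p4:
  "\<exists>C::real. \<forall>(A::('a, 'b) monoid_scheme) (r::nat) (P::(nat \<Rightarrow> nat) set).
     group A \<longrightarrow> finite (carrier A) \<longrightarrow> carrier A \<noteq> {\<one>\<^bsub>A\<^esub>} \<longrightarrow>
     r \<ge> 1 \<longrightarrow> regular_perm_group r P \<longrightarrow>
     \<bar>real (num_conj_classes (wreath A r P))
        - real (num_conj_classes A) ^ r / real r\<bar>
       \<le> C * real r * real (num_conj_classes A) powr (real r / 2)"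
proof (intro exI allI impI)
  fix A :: "('a, 'b) monoid_scheme" and r :: nat and P :: "(nat \<Rightarrow> nat) set"
  assume "group A" "finite (carrier A)" "r \<ge> 1" "regular_perm_group r P"
  then interpret W: wr A r P by (intro wr.intro wr_axioms.intro)
  show "\<bar>real (num_conj_classes (wreath A r P)) - real (num_conj_classes A) ^ r / real r\<bar>
       \<le> 2 * real r * real (num_conj_classes A) powr (real r / 2)"
    using W.main[OF \<open>r \<ge> 1\<close>] .
qed


end
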